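(* Let $G$ be a finite graph, let $H$ be a connected graph, and let $f$ be a covering projection from $G$ to $H$. Let $S\subseteq V_G$ be a cutset of $G$ and let $A$ be (the vertex set of) a connected component of $G\setminus S$. Then for any two vertices $u,v\in V_H$ it holds that $|f^{-1}(u)\cap A|-|f^{-1}(v)\cap A|\le |S|$.
   Context: A graph is a triple $(V,\Lambda,\iota)$ where $V$ is a set of vertices, $\Lambda=E\cup L\cup S$ is a set of links partitioned into edges, loops and semi-edges, and $\iota$ assigns to each edge a 2-element subset of $V$ and to each loop or semi-edge a single vertex. A covering projection from $G$ to $H$ is a map $f:V_G\cup\Lambda_G\to V_H\cup\Lambda_H$ sending vertices to vertices and links to links such that: for every edge $e$ of $H$ with end-vertices $u,v$, $f^{-1}(e)$ is a perfect matching between $f^{-1}(u)$ and $f^{-1}(v)$; for every loop $l$ of $H$ at $u$, $f^{-1}(l)$ is a disjoint union of cycles (including 2-cycles formed by parallel edges, and loops) spanning $f^{-1}(u)$; for every semi-edge $s$ of $H$ at $u$, $f^{-1}(s)$ is a disjoint union of edges and semi-edges spanning $f^{-1}(u)$. A cutset of $G$ is a set of vertices whose removal disconnects $G$. *)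

theory Defs
  imports Main
begin

record ('v, 'l) mgraph =
  verts :: "'v set"
  edges :: "'l set"
  loops :: "'l set"
  semis :: "'l set"
  inc   :: "'l \<Rightarrow> 'v set"

definition links :: "('v, 'l) mgraph \<Rightarrow> 'l set" where
  "links G = edges G \<union> loops G \<union> semis G"

definition is_graph :: "('v, 'l) mgraph \<Rightarrow> bool" where
  "is_graph G \<longleftrightarrow>
     edges G \<inter> loops G = {} \<and> edges G \<inter> semis G = {} \<and> loops G \<inter> semis G = {} \<and>
     (\<forall>e\<in>edges G. inc G e \<subseteq> verts G \<and> card (inc G e) = 2) \<and>
     (\<forall>l\<in>loops G \<union> semis G. \<exists>x\<in>verts G. inc G l = {x})"

definition finite_graph :: "('v, 'l) mgraph \<Rightarrow> bool" where
  "finite_graph G \<longleftrightarrow> is_graph G \<and> finite (verts G) \<and> finite (links G)"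

definition ldeg :: "('v, 'l) mgraph \<Rightarrow> 'l set \<Rightarrow> 'v \<Rightarrow> nat" where
  "ldeg G F x = card {e \<in> F \<inter> edges G. x \<in> inc G e}
              + 2 * card {l \<in> F \<inter> loops G. inc G l = {x}}
              + card {s \<in> F \<inter> semis G. inc G s = {x}}"

definition covering :: "('v, 'l) mgraph \<Rightarrow> ('w, 'm) mgraph \<Rightarrow> ('v \<Rightarrow> 'w) \<Rightarrow> ('l \<Rightarrow> 'm) \<Rightarrow> bool" where
  "covering G H fv fl \<longleftrightarrow>
     fv ` verts G \<subseteq> verts H \<and> fl ` links G \<subseteq> links H \<and>
     (let fib = (\<lambda>u. {x \<in> verts G. fv x = u});
          pre = (\<lambda>a. {e \<in> links G. fl e = a}) in
       \<comment> \<open>edges: preimage is a perfect matching between the two fibres\<close>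
       (\<forall>a\<in>edges H. \<forall>u v. inc H a = {u, v} \<longrightarrow>
          pre a \<subseteq> edges G \<and>
          (\<forall>e\<in>pre a. inc G e \<inter> fib u \<noteq> {} \<and> inc G e \<inter> fib v \<noteq> {}
                     \<and> inc G e \<subseteq> fib u \<union> fib v) \<and>
          (\<forall>x\<in>fib u \<union> fib v. ldeg G (pre a) x = 1)) \<and>
       \<comment> \<open>loops: preimage is a disjoint union of cycles (2-regular, loops counting twice)
           spanning the fibre\<close>
       (\<forall>a\<in>loops H. \<forall>u. inc H a = {u} \<longrightarrow>
          pre a \<subseteq> edges G \<union> loops G \<and>
          (\<forall>e\<in>pre a. inc G e \<subseteq> fib u) \<and>
          (\<forall>x\<in>fib u. ldeg G (pre a) x = 2)) \<and>
       \<comment> \<open>semi-edges: preimage is a disjoint union of edges and semi-edges spanning the fibre\<close>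
       (\<forall>a\<in>semis H. \<forall>u. inc H a = {u} \<longrightarrow>
          pre a \<subseteq> edges G \<union> semis G \<and>
          (\<forall>e\<in>pre a. inc G e \<subseteq> fib u) \<and>
          (\<forall>x\<in>fib u. ldeg G (pre a) x = 1)))"

definition adj_in :: "('v, 'l) mgraph \<Rightarrow> 'v set \<Rightarrow> 'v \<Rightarrow> 'v \<Rightarrow> bool" where
  "adj_in G W x y \<longleftrightarrow> x \<in> W \<and> y \<in> W \<and> (\<exists>e\<in>edges G. inc G e = {x, y})"

definition reach_in :: "('v, 'l) mgraph \<Rightarrow> 'v set \<Rightarrow> 'v \<Rightarrow> 'v \<Rightarrow> bool" where
  "reach_in G W x y \<longleftrightarrow> x \<in> W \<and> (adj_in G W)\<^sup>*\<^sup>* x y"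

definition connected_graph :: "('v, 'l) mgraph \<Rightarrow> bool" where
  "connected_graph G \<longleftrightarrow> verts G \<noteq> {} \<and>
     (\<forall>x\<in>verts G. \<forall>y\<in>verts G. reach_in G (verts G) x y)"

definition cutset :: "('v, 'l) mgraph \<Rightarrow> 'v set \<Rightarrow> bool" where
  "cutset G S \<longleftrightarrow> S \<subseteq> verts G \<and>
     (\<exists>x\<in>verts G - S. \<exists>y\<in>verts G - S. \<not> reach_in G (verts G - S) x y)"

definition component_of_removal :: "('v, 'l) mgraph \<Rightarrow> 'v set \<Rightarrow> 'v set \<Rightarrow> bool" where
  "component_of_removal G S A \<longleftrightarrow>
     (\<exists>x\<in>verts G - S. A = {y. reach_in G (verts G - S) x y})"

end

theory Submission
  imports Defs "HOL-Library.Transitive_Closure_Table"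
begin

lemma is_graph_facts:
  assumes "is_graph G"
  shows "edges G \<inter> loops G = {}" "edges G \<inter> semis G = {}"
    "\<And>e. e \<in> edges G \<Longrightarrow> inc G e \<subseteq> verts G"
    "\<And>e. e \<in> edges G \<Longrightarrow> card (inc G e) = 2"
  using assms unfolding is_graph_def by simp_all

lemma step_bound:
  fixes G :: "('v, 'l) mgraph" and H :: "('w, 'm) mgraph"
    and fv :: "'v \<Rightarrow> 'w" and fl :: "'l \<Rightarrow> 'm"
  assumes fg: "finite_graph G" and gH: "is_graph H" and cov: "covering G H fv fl"
    and AS: "A \<subseteq> verts G - S"
    and Acl: "\<And>x y. x \<in> A \<Longrightarrow> y \<in> verts G - S \<Longrightarrow> (\<exists>e\<in>edges G. inc G e = {x,y}) \<Longrightarrow> y \<in> A"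
    and a: "a \<in> edges H" "inc H a = {u, u'}"
  shows "card ({x \<in> verts G. fv x = u} \<inter> A)
         \<le> card ({x \<in> verts G. fv x = u'} \<inter> A) + card ({x \<in> verts G. fv x = u'} \<inter> S)"
proof -
  define fib where "fib = (\<lambda>w. {x \<in> verts G. fv x = w})"
  define pre where "pre = {e \<in> links G. fl e = a}"
  have "card (inc H a) = 2" using is_graph_facts(4)[OF gH a(1)] .
  then have uu: "u \<noteq> u'" using a by auto
  have C: "pre \<subseteq> edges G \<and>
          (\<forall>e\<in>pre. inc G e \<inter> fib u \<noteq> {} \<and> inc G e \<inter> fib u' \<noteq> {}
                     \<and> inc G e \<subseteq> fib u \<union> fib u') \<and>
          (\<forall>x\<in>fib u \<union> fib u'. ldeg G pre x = 1)"
  proof -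
    have H0: "\<forall>a\<in>edges H. \<forall>u v. inc H a = {u, v} \<longrightarrow>
          {e \<in> links G. fl e = a} \<subseteq> edges G \<and>
          (\<forall>e\<in>{e \<in> links G. fl e = a}. inc G e \<inter> {x \<in> verts G. fv x = u} \<noteq> {} \<and> inc G e \<inter> {x \<in> verts G. fv x = v} \<noteq> {}
                     \<and> inc G e \<subseteq> {x \<in> verts G. fv x = u} \<union> {x \<in> verts G. fv x = v}) \<and>
          (\<forall>x\<in>{x \<in> verts G. fv x = u} \<union> {x \<in> verts G. fv x = v}. ldeg G {e \<in> links G. fl e = a} x = 1)"
      using cov unfolding covering_def Let_def by (elim conjE)
    show ?thesis unfolding fib_def pre_def by (rule H0[rule_format, OF a(1) a(2)])
  qed
  have gG: "is_graph G" and finL: "finite (links G)" and finV: "finite (verts G)"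
    using fg unfolding finite_graph_def by auto
  have finpre: "finite pre" using finL unfolding pre_def by simp
  have deg: "card {e \<in> pre. x \<in> inc G e} = 1" if "x \<in> fib u \<union> fib u'" for x
  proof -
    have e1: "{l \<in> pre \<inter> loops G. inc G l = {x}} = {}" "{s \<in> pre \<inter> semis G. inc G s = {x}} = {}"
      "pre \<inter> edges G = pre"
      using C is_graph_facts(1,2)[OF gG] by blast+
    have "ldeg G pre x = 1" using C that by blast
    then show ?thesis unfolding ldeg_def e1 by simp
  qed
  have disj: "fib u \<inter> fib u' = {}" using uu unfolding fib_def by auto
  define r where "r = (\<lambda>x y. \<exists>e\<in>pre. inc G e = {x, y})"
  have "card (fib u \<inter> A) \<le> card (fib u' \<inter> A \<union> fib u' \<inter> S)"
  proof (rule card_le_if_inj_on_rel[where r = r])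
    show "finite (fib u' \<inter> A \<union> fib u' \<inter> S)" using finV unfolding fib_def by auto
  next
    fix x assume x: "x \<in> fib u \<inter> A"
    have "card {e \<in> pre. x \<in> inc G e} = 1" using deg x by blast
    then obtain e0 where "{e \<in> pre. x \<in> inc G e} = {e0}" by (rule card_1_singletonE)
    then obtain e where e: "e \<in> pre" "x \<in> inc G e" by blast
    then obtain y where y: "y \<in> inc G e" "y \<in> fib u'" using C by blast
    have xy: "x \<noteq> y" using x y disj by blast
    have eE: "e \<in> edges G" using C e by blast
    have "card (inc G e) = 2" "inc G e \<subseteq> verts G" using is_graph_facts(3,4)[OF gG eE] by auto
    then obtain p q where pq: "inc G e = {p, q}" "p \<noteq> q" by (meson card_2_iff)
    then have ie: "inc G e = {x, y}" using e y xy by auto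
    have "y \<in> A \<or> y \<in> S"
    proof (cases "y \<in> S")
      case False
      then have "y \<in> verts G - S" using y unfolding fib_def by auto
      then show ?thesis using Acl[of x y] x eE ie by blast
    qed simp
    then show "\<exists>b. b \<in> fib u' \<inter> A \<union> fib u' \<inter> S \<and> r x b" using y e ie unfolding r_def by blast
  next
    fix x1 x2 y assume h: "x1 \<in> fib u \<inter> A" "x2 \<in> fib u \<inter> A" "y \<in> fib u' \<inter> A \<union> fib u' \<inter> S" "r x1 y" "r x2 y"
    then obtain e1 e2 where e: "e1 \<in> pre" "inc G e1 = {x1, y}" "e2 \<in> pre" "inc G e2 = {x2, y}"
      unfolding r_def by blast
    have "card {e \<in> pre. y \<in> inc G e} = 1" using deg h by blast
    moreover have "e1 \<in> {e \<in> pre. y \<in> inc G e}" "e2 \<in> {e \<in> pre. y \<in> inc G e}" using e by auto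
    ultimately have "e1 = e2" by (metis (no_types, lifting) card_1_singletonE singletonD)
    moreover have "x1 \<noteq> y" "x2 \<noteq> y" using h disj by blast+
    ultimately show "x1 = x2" using e by (metis doubleton_eq_iff)
  qed
  also have "\<dots> \<le> card (fib u' \<inter> A) + card (fib u' \<inter> S)" by (rule card_Un_le)
  finally show ?thesis unfolding fib_def .
qed

lemma path_bound:
  fixes f g :: "'a \<Rightarrow> nat"
  assumes "rtrancl_path R p xs q" "distinct xs" "\<And>a b. R a b \<Longrightarrow> f a \<le> f b + g b"
  shows "f p \<le> f q + sum g (set xs)"
  using assms
proof (induction rule: rtrancl_path.induct)
  case (base x) then show ?case by simp
next
  case (step x y ys z)
  have "f x \<le> f y + g y" using step by blast
  moreover have "f y \<le> f z + sum g (set ys)" using step by simp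
  moreover have "sum g (set (y # ys)) = g y + sum g (set ys)" using step(4) by simp
  ultimately show ?case by simp
qed

lemma reach_in_W: "(adj_in G W)\<^sup>*\<^sup>* x y \<Longrightarrow> x \<in> W \<Longrightarrow> y \<in> W"
  by (induction rule: rtranclp_induct) (auto simp: adj_in_def)

theorem mainTheorem2:
  fixes G :: "('v, 'l) mgraph" and H :: "('w, 'm) mgraph"
    and fv :: "'v \<Rightarrow> 'w" and fl :: "'l \<Rightarrow> 'm"
  assumes "finite_graph G"
    and "is_graph H"
    and "connected_graph H"
    and "covering G H fv fl"
    and "cutset G S"
    and "component_of_removal G S A"
    and "u \<in> verts H" and "v \<in> verts H"
  shows "int (card ({x \<in> verts G. fv x = u} \<inter> A)) - int (card ({x \<in> verts G. fv x = v} \<inter> A))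
         \<le> int (card S)"
proof -
  define W where "W = verts G - S"
  obtain x0 where x0: "x0 \<in> W" "A = {y. reach_in G W x0 y}"
    using assms(6) unfolding component_of_removal_def W_def by blast
  have AS: "A \<subseteq> verts G - S"
  proof
    fix y assume "y \<in> A"
    then have "(adj_in G W)\<^sup>*\<^sup>* x0 y" using x0 unfolding reach_in_def by blast
    then have "y \<in> W" using x0(1) by (rule reach_in_W)
    then show "y \<in> verts G - S" unfolding W_def .
  qed
  have Acl: "y \<in> A" if "x \<in> A" "y \<in> verts G - S" "\<exists>e\<in>edges G. inc G e = {x,y}" for x y
  proof -
    have "adj_in G W x y" using that AS unfolding adj_in_def W_def by blast
    have "(adj_in G W)\<^sup>*\<^sup>* x0 x" using that(1) x0 unfolding reach_in_def by blast
    then have "(adj_in G W)\<^sup>*\<^sup>* x0 y" using \<open>adj_in G W x y\<close> by (rule rtranclp.rtrancl_into_rtrancl)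
    then show ?thesis using x0 unfolding reach_in_def by blast
  qed
  define f where "f = (\<lambda>w. card ({x \<in> verts G. fv x = w} \<inter> A))"
  define g where "g = (\<lambda>w. card ({x \<in> verts G. fv x = w} \<inter> S))"
  have stp: "f a \<le> f b + g b" if ab: "adj_in H (verts H) a b" for a b
  proof -
    obtain e where e: "e \<in> edges H" "inc H e = {a, b}" using ab unfolding adj_in_def by blast
    show ?thesis unfolding f_def g_def
      by (rule step_bound[OF assms(1,2,4) AS _ e]) (rule Acl)
  qed
  have "(adj_in H (verts H))\<^sup>*\<^sup>* u v" using assms(3,7,8) unfolding connected_graph_def reach_in_def by blast
  then obtain xs where "rtrancl_path (adj_in H (verts H)) u xs v"
    by (auto simp: rtranclp_eq_rtrancl_path)
  then obtain xs' where p: "rtrancl_path (adj_in H (verts H)) u xs' v" "distinct (u # xs')"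
    by (rule rtrancl_path_distinct)
  have 1: "f u \<le> f v + sum g (set xs')"
    using path_bound[OF p(1) _ stp] p(2) by simp
  have finS: "finite S" using assms(1,5) unfolding finite_graph_def cutset_def
    by (meson finite_subset)
  have "sum g (set xs') = card (\<Union>w\<in>set xs'. {x \<in> verts G. fv x = w} \<inter> S)"
    unfolding g_def using finS by (subst card_UN_disjoint) (simp_all, blast)
  also have "\<dots> \<le> card S" using finS by (intro card_mono) auto
  finally show ?thesis using 1 unfolding f_def by simp
qed

end
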